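(* For every integer $k\ge 1$ there is a constant $c_k>0$, depending only on $k$, such that the following holds. Let $D$ be a finite set with $|D|=2^L$ for some integer $L\ge 0$, let $n\ge 0$ and $T\ge 1$ be integers, and let $f:D^{n+1}\to\mathbb{R}$ be of the form $$f(x_0,x_1,\dots,x_n)=\sum_{t=1}^T f_t(x_0,x_1,\dots,x_n),$$ where each $f_t:D^{n+1}\to\mathbb{R}$ depends on at most $k$ of the variables $x_0,\dots,x_n$. Let $X_0,X_1,\dots,X_n$ be independent random variables, each uniformly distributed on $D$. Then $$\mathbb{E}\Big[\max_{x\in D} f(x,X_1,\dots,X_n)-f(X_0,X_1,\dots,X_n)\Big]\;\ge\; c_k\,T^{-1}|D|^{-k}\max_{x^+,x^-,x_1,\dots,x_n\in D}\big(f(x^+,x_1,\dots,x_n)-f(x^-,x_1,\dots,x_n)\big).$$ *)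

theory Defs
  imports "HOL-Probability.Probability"
begin

text \<open>Points of D^(n+1) are extensional functions on the index set {0..n}.\<close>

definition depends_on_at_most ::
  "nat \<Rightarrow> nat \<Rightarrow> 'a set \<Rightarrow> ((nat \<Rightarrow> 'a) \<Rightarrow> real) \<Rightarrow> bool" where
  "depends_on_at_most k n D g \<longleftrightarrow>
     (\<exists>S \<subseteq> {0..n}. card S \<le> k \<and>
        (\<forall>x\<in>PiE {0..n} (\<lambda>_. D). \<forall>y\<in>PiE {0..n} (\<lambda>_. D).
           (\<forall>i\<in>S. x i = y i) \<longrightarrow> g x = g y))"

end

theory Submission
  imports Defs
begin

definition alt :: "nat set \<Rightarrow> (nat set \<Rightarrow> real) \<Rightarrow> real" where
  "alt R G = (\<Sum>Q\<in>Pow R. (-1) ^ card (R - Q) * G Q)"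

lemma alt_insert:
  assumes "finite R" "j \<notin> R"
  shows "alt (insert j R) G = alt R (\<lambda>Q. G (insert j Q) - G Q)"
proof -
  have inj: "inj_on (insert j) (Pow R)"
    using assms(2) by (auto simp: inj_on_def)
  have disj: "Pow R \<inter> insert j ` Pow R = {}" using assms(2) by auto
  have "alt (insert j R) G = (\<Sum>Q\<in>Pow R. (-1) ^ card (insert j R - Q) * G Q)
      + (\<Sum>Q\<in>insert j ` Pow R. (-1) ^ card (insert j R - Q) * G Q)"
    unfolding alt_def Pow_insert using assms(1) disj by (simp add: sum.union_disjoint)
  also have "(\<Sum>Q\<in>insert j ` Pow R. (-1) ^ card (insert j R - Q) * G Q)
      = (\<Sum>Q\<in>Pow R. (-1) ^ card (insert j R - insert j Q) * G (insert j Q))"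
    using inj by (simp add: sum.reindex)
  also have "\<dots> = (\<Sum>Q\<in>Pow R. (-1) ^ card (R - Q) * G (insert j Q))"
  proof (rule sum.cong)
    fix Q assume "Q \<in> Pow R"
    then have "insert j R - insert j Q = R - Q" using assms(2) by auto
    then show "(-1) ^ card (insert j R - insert j Q) * G (insert j Q) = (-1) ^ card (R - Q) * G (insert j Q)" by simp
  qed simp
  also have "(\<Sum>Q\<in>Pow R. (-1) ^ card (insert j R - Q) * G Q) = (\<Sum>Q\<in>Pow R. - ((-1) ^ card (R - Q) * G Q))"
  proof (rule sum.cong)
    fix Q assume "Q \<in> Pow R"
    then have "insert j R - Q = insert j (R - Q)" "j \<notin> R - Q" using assms(2) by auto
    then have "card (insert j R - Q) = Suc (card (R - Q))" using assms(1) by simp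
    then show "(-1) ^ card (insert j R - Q) * G Q = - ((-1) ^ card (R - Q) * G Q)" by simp
  qed simp
  finally show ?thesis unfolding alt_def
    by (simp add: sum_subtractf sum_negf right_diff_distrib)
qed

lemma alt_diff: "alt R (\<lambda>Q. G Q - H Q) = alt R G - alt R H"
  unfolding alt_def by (simp add: sum_subtractf right_diff_distrib)

lemma alt_sum: "alt R (\<lambda>Q. \<Sum>t\<in>J. G t Q) = (\<Sum>t\<in>J. alt R (G t))"
  unfolding alt_def by (simp add: sum_distrib_left sum.swap[of _ J])

lemma alt_zero:
  assumes "finite R" "j \<in> R" "\<And>Q. G (insert j Q) = G Q"
  shows "alt R G = 0"
proof -
  have "R = insert j (R - {j})" using assms(2) by auto
  then have "alt R G = alt (R - {j}) (\<lambda>Q. G (insert j Q) - G Q)"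
    using alt_insert[of "R - {j}" j G] assms(1) by simp
  then show ?thesis using assms(3) by (simp add: alt_def)
qed

lemma alt_mobius: "finite S \<Longrightarrow> (\<Sum>R\<in>Pow S. alt R G) = G S"
proof (induction S arbitrary: G rule: finite_induct)
  case empty
  then show ?case by (simp add: alt_def)
next
  case (insert j S)
  have inj: "inj_on (insert j) (Pow S)"
    using insert(2) by (auto simp: inj_on_def)
  have disj: "Pow S \<inter> insert j ` Pow S = {}" using insert(2) by auto
  have "(\<Sum>R\<in>Pow (insert j S). alt R G) = (\<Sum>R\<in>Pow S. alt R G) + (\<Sum>R\<in>Pow S. alt (insert j R) G)"
    unfolding Pow_insert using insert(1) disj inj by (simp add: sum.union_disjoint sum.reindex)
  also have "(\<Sum>R\<in>Pow S. alt (insert j R) G) = (\<Sum>R\<in>Pow S. alt R (\<lambda>Q. G (insert j Q)) - alt R G)"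
  proof (rule sum.cong)
    fix R assume "R \<in> Pow S"
    then have "finite R" "j \<notin> R" using insert(1,2) finite_subset by auto
    then show "alt (insert j R) G = alt R (\<lambda>Q. G (insert j Q)) - alt R G"
      by (simp add: alt_insert alt_diff)
  qed simp
  also have "(\<Sum>R\<in>Pow S. alt R G) + (\<Sum>R\<in>Pow S. alt R (\<lambda>Q. G (insert j Q)) - alt R G)
     = (\<Sum>R\<in>Pow S. alt R (\<lambda>Q. G (insert j Q)))" by (simp add: sum_subtractf)
  also have "\<dots> = G (insert j S)" using insert(3) by simp
  finally show ?case .
qed

lemma alt_bound:
  assumes "finite R" "\<And>Q. Q \<subseteq> R \<Longrightarrow> \<bar>G Q\<bar> \<le> B"
  shows "\<bar>alt R G\<bar> \<le> 2 ^ card R * B"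
proof -
  have "\<bar>alt R G\<bar> \<le> (\<Sum>Q\<in>Pow R. \<bar>(-1) ^ card (R - Q) * G Q\<bar>)"
    unfolding alt_def by (rule sum_abs)
  also have "\<dots> \<le> (\<Sum>Q\<in>Pow R. B)"
    by (rule sum_mono) (use assms(2) in \<open>auto simp: abs_mult\<close>)
  also have "\<dots> = 2 ^ card R * B" using assms(1) by (simp add: card_Pow)
  finally show ?thesis .
qed

lemma upd_in: "x \<in> PiE I (\<lambda>_. D) \<Longrightarrow> j \<in> I \<Longrightarrow> a \<in> D \<Longrightarrow> x(j:=a) \<in> PiE I (\<lambda>_. D)"
  by (auto simp: PiE_def extensional_def Pi_def)

lemma sum_upd:
  fixes g :: "(nat \<Rightarrow> 'a) \<Rightarrow> real"
  assumes "j \<in> I"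
  shows "(\<Sum>x\<in>PiE I (\<lambda>_. D). \<Sum>a\<in>D. g (x(j:=a))) = card D * (\<Sum>x\<in>PiE I (\<lambda>_. D). g x)"
proof -
  let ?O = "PiE I (\<lambda>_. D)"
  define \<phi> where "\<phi> = (\<lambda>p::(nat \<Rightarrow> 'a) \<times> 'a. ((fst p)(j := snd p), fst p j))"
  have bij: "bij_betw \<phi> (?O \<times> D) (?O \<times> D)"
    by (rule bij_betw_byWitness[where f'=\<phi>]) (auto simp: \<phi>_def upd_in assms PiE_mem)
  have "(\<Sum>x\<in>?O. \<Sum>a\<in>D. g (x(j:=a))) = (\<Sum>p\<in>?O \<times> D. g (fst (\<phi> p)))"
    by (simp add: sum.cartesian_product \<phi>_def case_prod_beta)
  also have "\<dots> = (\<Sum>p\<in>?O \<times> D. g (fst p))"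
    using sum.reindex_bij_betw[OF bij, of "\<lambda>p. g (fst p)"] by simp
  also have "\<dots> = (\<Sum>x\<in>?O. \<Sum>a\<in>D. g x)"
    using sum.cartesian_product[of "\<lambda>x a. g x" D ?O] by (simp add: case_prod_beta)
  also have "\<dots> = card D * (\<Sum>x\<in>?O. g x)"
    by (simp add: sum_distrib_left mult.commute)
  finally show ?thesis .
qed

lemma sum_upd_le:
  fixes g :: "(nat \<Rightarrow> 'a) \<Rightarrow> real"
  assumes "j \<in> I" "c \<in> D" "finite D" "finite I" "\<And>x. x \<in> PiE I (\<lambda>_. D) \<Longrightarrow> g x \<ge> 0"
  shows "(\<Sum>x\<in>PiE I (\<lambda>_. D). g (x(j:=c))) \<le> card D * (\<Sum>x\<in>PiE I (\<lambda>_. D). g x)"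
proof -
  have "(\<Sum>x\<in>PiE I (\<lambda>_. D). g (x(j:=c))) \<le> (\<Sum>x\<in>PiE I (\<lambda>_. D). \<Sum>a\<in>D. g (x(j:=a)))"
    by (rule sum_mono, rule member_le_sum) (use assms in \<open>auto intro!: assms(5) upd_in\<close>)
  then show ?thesis using sum_upd[OF assms(1), of g D] by simp
qed

definition mrg :: "nat set \<Rightarrow> (nat \<Rightarrow> 'a) \<Rightarrow> (nat \<Rightarrow> 'a) \<Rightarrow> nat \<Rightarrow> 'a" where
  "mrg Q z x = (\<lambda>i. if i \<in> Q then z i else x i)"

lemma mrg_in: "z \<in> PiE I (\<lambda>_. D) \<Longrightarrow> x \<in> PiE I (\<lambda>_. D) \<Longrightarrow> mrg Q z x \<in> PiE I (\<lambda>_. D)"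
  by (auto simp: PiE_def extensional_def Pi_def mrg_def)

lemma mrg_insert: "mrg (insert j Q) z x = mrg Q z (x(j := z j))"
  by (auto simp: mrg_def fun_eq_iff)

lemma sum_mrg_le:
  fixes g :: "(nat \<Rightarrow> 'a) \<Rightarrow> real"
  assumes "finite Q" "Q \<subseteq> I" "finite D" "finite I" "z \<in> PiE I (\<lambda>_. D)"
    "\<And>x. x \<in> PiE I (\<lambda>_. D) \<Longrightarrow> g x \<ge> 0"
  shows "(\<Sum>x\<in>PiE I (\<lambda>_. D). g (mrg Q z x)) \<le> card D ^ card Q * (\<Sum>x\<in>PiE I (\<lambda>_. D). g x)"
  using assms(1,2)
proof (induction Q rule: finite_induct)
  case empty
  then show ?case by (simp add: mrg_def)
next
  case (insert j Q)
  have "(\<Sum>x\<in>PiE I (\<lambda>_. D). g (mrg (insert j Q) z x)) = (\<Sum>x\<in>PiE I (\<lambda>_. D). (\<lambda>y. g (mrg Q z y)) (x(j := z j)))"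
    by (simp add: mrg_insert)
  also have "\<dots> \<le> card D * (\<Sum>x\<in>PiE I (\<lambda>_. D). g (mrg Q z x))"
    by (rule sum_upd_le) (use insert assms PiE_mem in \<open>auto intro!: assms(6) mrg_in\<close>)
  also have "\<dots> \<le> card D * (card D ^ card Q * (\<Sum>x\<in>PiE I (\<lambda>_. D). g x))"
    using insert by (intro mult_left_mono) auto
  finally show ?case using insert by simp
qed

lemma junta_mobius:
  fixes u :: "(nat \<Rightarrow> 'a) \<Rightarrow> real"
  assumes "finite I" "finite D" "D \<noteq> {}" "finite A" "Pow S \<subseteq> A" "S \<subseteq> I"
    "z \<in> PiE I (\<lambda>_. D)"
    and jun: "\<And>x y. x \<in> PiE I (\<lambda>_. D) \<Longrightarrow> y \<in> PiE I (\<lambda>_. D) \<Longrightarrow> (\<forall>i\<in>S. x i = y i) \<Longrightarrow> u x = u y"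
    and finA: "\<And>R. R \<in> A \<Longrightarrow> finite R"
  shows "(\<Sum>R\<in>A. alt R (\<lambda>Q. (\<Sum>x\<in>PiE I (\<lambda>_. D). u (mrg Q z x)) / card (PiE I (\<lambda>_. D)))) = u z"
proof -
  let ?O = "PiE I (\<lambda>_. D)"
  define F where "F = (\<lambda>Q. (\<Sum>x\<in>?O. u (mrg Q z x)) / card ?O)"
  have finS: "finite S" using assms(1,6) finite_subset by auto
  have finO: "finite ?O" using assms(1,2) by (simp add: finite_PiE)
  have neO: "?O \<noteq> {}" using assms(3) by (simp add: PiE_eq_empty_iff)
  have split: "A = Pow S \<union> (A - Pow S)" using assms(5) by auto
  have "(\<Sum>R\<in>A. alt R F) = (\<Sum>R\<in>Pow S. alt R F) + (\<Sum>R\<in>A - Pow S. alt R F)"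
    using assms(4) finS by (subst split, subst sum.union_disjoint) auto
  also have "(\<Sum>R\<in>A - Pow S. alt R F) = 0"
  proof (rule sum.neutral, rule ballI)
    fix R assume R: "R \<in> A - Pow S"
    then obtain j where j: "j \<in> R" "j \<notin> S" by auto
    show "alt R F = 0"
    proof (rule alt_zero[OF finA j(1)])
      show "R \<in> A" using R by simp
      fix Q
      have "\<And>x. x \<in> ?O \<Longrightarrow> u (mrg (insert j Q) z x) = u (mrg Q z x)"
        by (rule jun) (use assms(7) j(2) in \<open>auto simp: mrg_in mrg_def\<close>)
      then show "F (insert j Q) = F Q" unfolding F_def by (simp cong: sum.cong)
    qed
  qed
  also have "(\<Sum>R\<in>Pow S. alt R F) = F S" using finS by (rule alt_mobius)
  also have "F S = u z"
  proof -
    have "\<And>x. x \<in> ?O \<Longrightarrow> u (mrg S z x) = u z"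
      by (rule jun) (use assms(7) in \<open>auto simp: mrg_in mrg_def\<close>)
    then have "(\<Sum>x\<in>?O. u (mrg S z x)) = card ?O * u z" by simp
    then show ?thesis unfolding F_def using finO neO by simp
  qed
  finally show ?thesis unfolding F_def by simp
qed

lemma junta_bound:
  fixes h :: "(nat \<Rightarrow> 'a) \<Rightarrow> real" and u :: "'b \<Rightarrow> (nat \<Rightarrow> 'a) \<Rightarrow> real"
  assumes finI: "finite I" and finD: "finite D" and neD: "D \<noteq> {}" and finJ: "finite J"
    and hsum: "\<And>x. x \<in> PiE I (\<lambda>_. D) \<Longrightarrow> h x = (\<Sum>t\<in>J. u t x)"
    and jun: "\<And>t x y. t \<in> J \<Longrightarrow> x \<in> PiE I (\<lambda>_. D) \<Longrightarrow> y \<in> PiE I (\<lambda>_. D) \<Longrightarrow>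
                (\<forall>i\<in>S t. x i = y i) \<Longrightarrow> u t x = u t y"
    and SI: "\<And>t. t \<in> J \<Longrightarrow> S t \<subseteq> I" and Sm: "\<And>t. t \<in> J \<Longrightarrow> card (S t) \<le> m"
    and z: "z \<in> PiE I (\<lambda>_. D)"
  shows "\<bar>h z\<bar> \<le> real (card J) * 4 ^ m * real (card D) ^ m * ((\<Sum>x\<in>PiE I (\<lambda>_. D). \<bar>h x\<bar>) / real (card (PiE I (\<lambda>_. D))))"
proof -
  let ?O = "PiE I (\<lambda>_. D)"
  define W where "W = real (card ?O)"
  define E where "E = (\<Sum>x\<in>?O. \<bar>h x\<bar>) / W"
  define F where "F = (\<lambda>Q. (\<Sum>x\<in>?O. h (mrg Q z x)) / W)"
  define Fu where "Fu = (\<lambda>t Q. (\<Sum>x\<in>?O. u t (mrg Q z x)) / W)"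
  define A where "A = (\<Union>t\<in>J. Pow (S t))"
  have finO: "finite ?O" using finI finD by (simp add: finite_PiE)
  have neO: "?O \<noteq> {}" using neD by (simp add: PiE_eq_empty_iff)
  have Wpos: "W > 0" unfolding W_def using finO neO by (simp add: card_gt_0_iff)
  have finS: "\<And>t. t \<in> J \<Longrightarrow> finite (S t)" using SI finI finite_subset by blast
  have finA: "finite A" unfolding A_def using finJ finS by auto
  have N1: "real (card D) \<ge> 1" using finD neD by (simp add: Suc_leI card_gt_0_iff)
  have FFu: "F Q = (\<Sum>t\<in>J. Fu t Q)" for Q
  proof -
    have "(\<Sum>x\<in>?O. h (mrg Q z x)) = (\<Sum>x\<in>?O. \<Sum>t\<in>J. u t (mrg Q z x))"
      using hsum mrg_in[OF z] by (simp cong: sum.cong)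
    then show ?thesis unfolding F_def Fu_def by (simp add: sum.swap[of _ J] sum_divide_distrib)
  qed
  have "(\<Sum>R\<in>A. alt R F) = (\<Sum>t\<in>J. \<Sum>R\<in>A. alt R (Fu t))"
  proof -
    have "F = (\<lambda>Q. \<Sum>t\<in>J. Fu t Q)" using FFu by (simp add: fun_eq_iff)
    then have "(\<Sum>R\<in>A. alt R F) = (\<Sum>R\<in>A. \<Sum>t\<in>J. alt R (Fu t))" by (simp add: alt_sum)
    then show ?thesis using sum.swap[of "\<lambda>R t. alt R (Fu t)" J A] by simp
  qed
  also have "\<dots> = (\<Sum>t\<in>J. u t z)"
  proof (rule sum.cong)
    fix t assume t: "t \<in> J"
    show "(\<Sum>R\<in>A. alt R (Fu t)) = u t z"
      unfolding Fu_def W_def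
    proof (rule junta_mobius[OF finI finD neD finA _ SI[OF t] z])
      show "Pow (S t) \<subseteq> A" using t unfolding A_def by blast
      show "u t x = u t y" if "x \<in> ?O" "y \<in> ?O" "\<forall>i\<in>S t. x i = y i" for x y
        using jun[OF t that] .
      show "finite R" if RA: "R \<in> A" for R
      proof -
        obtain t' where "t' \<in> J" "R \<subseteq> S t'" using RA unfolding A_def by blast
        then show ?thesis using finS finite_subset by blast
      qed
    qed
  qed simp
  also have "\<dots> = h z" using hsum z by simp
  finally have hz: "h z = (\<Sum>R\<in>A. alt R F)" by simp
  have bF: "\<bar>F Q\<bar> \<le> real (card D) ^ m * E" if "Q \<subseteq> S t" "t \<in> J" for Q t
  proof -
    have finQ: "finite Q" using that finS finite_subset by blast
    have cQ: "card Q \<le> m" using card_mono[OF finS[OF that(2)] that(1)] Sm[OF that(2)] by linarith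
    have "\<bar>F Q\<bar> \<le> (\<Sum>x\<in>?O. \<bar>h (mrg Q z x)\<bar>) / W"
      unfolding F_def using Wpos by (simp add: divide_right_mono sum_abs)
    also have "\<dots> \<le> (real (card D) ^ card Q * (\<Sum>x\<in>?O. \<bar>h x\<bar>)) / W"
    proof (rule divide_right_mono)
      have QI: "Q \<subseteq> I" using that SI by blast
      show "(\<Sum>x\<in>?O. \<bar>h (mrg Q z x)\<bar>) \<le> real (card D) ^ card Q * (\<Sum>x\<in>?O. \<bar>h x\<bar>)"
        using sum_mrg_le[OF finQ QI finD finI z, of "\<lambda>x. \<bar>h x\<bar>"] by simp
    qed (use Wpos in simp)
    also have "\<dots> \<le> (real (card D) ^ m * (\<Sum>x\<in>?O. \<bar>h x\<bar>)) / W"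
      using Wpos N1 cQ by (intro divide_right_mono mult_right_mono power_increasing) (auto intro: sum_nonneg)
    finally show ?thesis unfolding E_def by simp
  qed
  have E0: "E \<ge> 0" unfolding E_def using Wpos by (auto intro: sum_nonneg)
  have "\<bar>h z\<bar> \<le> (\<Sum>R\<in>A. \<bar>alt R F\<bar>)" unfolding hz by (rule sum_abs)
  also have "\<dots> \<le> (\<Sum>R\<in>A. 2 ^ m * (real (card D) ^ m * E))"
  proof (rule sum_mono)
    fix R assume "R \<in> A"
    then obtain t where t: "t \<in> J" "R \<subseteq> S t" unfolding A_def by auto
    have finR: "finite R" using t finS finite_subset by blast
    have cR: "card R \<le> m" using card_mono[OF finS[OF t(1)] t(2)] Sm[OF t(1)] by linarith
    have "\<bar>alt R F\<bar> \<le> 2 ^ card R * (real (card D) ^ m * E)"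
      by (rule alt_bound[OF finR]) (use t bF in blast)
    also have "\<dots> \<le> 2 ^ m * (real (card D) ^ m * E)"
      using cR E0 N1 by (intro mult_right_mono power_increasing) auto
    finally show "\<bar>alt R F\<bar> \<le> 2 ^ m * (real (card D) ^ m * E)" .
  qed
  also have "\<dots> = real (card A) * (2 ^ m * (real (card D) ^ m * E))" by simp
  also have "\<dots> \<le> (real (card J) * 2 ^ m) * (2 ^ m * (real (card D) ^ m * E))"
  proof (rule mult_right_mono)
    have "card A \<le> (\<Sum>t\<in>J. card (Pow (S t)))" unfolding A_def by (rule card_UN_le[OF finJ])
    also have "\<dots> \<le> (\<Sum>t\<in>J. 2 ^ m)"
      using finS Sm by (intro sum_mono) (simp add: card_Pow power_increasing)
    finally have "card A \<le> card J * 2 ^ m" by simp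
    then show "real (card A) \<le> real (card J) * 2 ^ m"
      by (metis of_nat_le_iff of_nat_mult of_nat_numeral of_nat_power)
  qed (use E0 in simp)
  also have "\<dots> = real (card J) * 4 ^ m * real (card D) ^ m * E"
  proof -
    have "(4::real) ^ m = 2 ^ m * 2 ^ m"
      using power_mult_distrib[of "2::real" 2 m] by simp
    then show ?thesis by (simp add: mult_ac)
  qed
  finally show ?thesis unfolding E_def W_def .
qed

theorem theorem2:
  shows "\<forall>k::nat. k \<ge> 1 \<longrightarrow> (\<exists>c::real. c > 0 \<and>
    (\<forall>(D::nat set) (L::nat) (n::nat) (T::nat)
       (ft :: nat \<Rightarrow> (nat \<Rightarrow> nat) \<Rightarrow> real) (f :: (nat \<Rightarrow> nat) \<Rightarrow> real).
       finite D \<and> card D = 2 ^ L \<and> T \<ge> 1 \<and>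
       (\<forall>t\<in>{1..T}. depends_on_at_most k n D (ft t)) \<and>
       (\<forall>x\<in>PiE {0..n} (\<lambda>_. D). f x = (\<Sum>t=1..T. ft t x))
       \<longrightarrow>
       measure_pmf.expectation (pmf_of_set (PiE {0..n} (\<lambda>_. D)))
          (\<lambda>X. Max ((\<lambda>a. f (X(0 := a))) ` D) - f X)
       \<ge> c * (1 / real T) * (1 / real (card D) ^ k) *
          Max {f (x(0 := a)) - f (x(0 := b)) | a b x.
                 a \<in> D \<and> b \<in> D \<and> x \<in> PiE {0..n} (\<lambda>_. D)}))"
proof (intro allI impI)
  fix k :: nat assume k: "k \<ge> 1"
  show "\<exists>c::real. c > 0 \<and>
    (\<forall>(D::nat set) (L::nat) (n::nat) (T::nat)
       (ft :: nat \<Rightarrow> (nat \<Rightarrow> nat) \<Rightarrow> real) (f :: (nat \<Rightarrow> nat) \<Rightarrow> real).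
       finite D \<and> card D = 2 ^ L \<and> T \<ge> 1 \<and>
       (\<forall>t\<in>{1..T}. depends_on_at_most k n D (ft t)) \<and>
       (\<forall>x\<in>PiE {0..n} (\<lambda>_. D). f x = (\<Sum>t=1..T. ft t x))
       \<longrightarrow>
       measure_pmf.expectation (pmf_of_set (PiE {0..n} (\<lambda>_. D)))
          (\<lambda>X. Max ((\<lambda>a. f (X(0 := a))) ` D) - f X)
       \<ge> c * (1 / real T) * (1 / real (card D) ^ k) *
          Max {f (x(0 := a)) - f (x(0 := b)) | a b x.
                 a \<in> D \<and> b \<in> D \<and> x \<in> PiE {0..n} (\<lambda>_. D)})"
  proof (intro exI[of _ "1 / 4 ^ (k - 1)"] conjI allI impI)
    show "(0::real) < 1 / 4 ^ (k - 1)" by simp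
    fix D :: "nat set" and L n T :: nat and ft :: "nat \<Rightarrow> (nat \<Rightarrow> nat) \<Rightarrow> real"
      and f :: "(nat \<Rightarrow> nat) \<Rightarrow> real"
    assume H: "finite D \<and> card D = 2 ^ L \<and> T \<ge> 1 \<and>
       (\<forall>t\<in>{1..T}. depends_on_at_most k n D (ft t)) \<and>
       (\<forall>x\<in>PiE {0..n} (\<lambda>_. D). f x = (\<Sum>t=1..T. ft t x))"
    let ?O = "PiE {0..n} (\<lambda>_. D)"
    let ?N = "real (card D)"
    have finD: "finite D" and cD: "card D = 2 ^ L" and T1: "T \<ge> 1"
      and dep: "\<forall>t\<in>{1..T}. depends_on_at_most k n D (ft t)"
      and fdef: "\<forall>x\<in>?O. f x = (\<Sum>t=1..T. ft t x)" using H by auto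
    have neD: "D \<noteq> {}" using cD by (metis card.empty power_not_zero zero_neq_numeral)
    have finO: "finite ?O" using finD by (simp add: finite_PiE)
    have neO: "?O \<noteq> {}" using neD by (simp add: PiE_eq_empty_iff)
    define W where "W = real (card ?O)"
    have Wpos: "W > 0" unfolding W_def using finO neO by (simp add: card_gt_0_iff)
    have N1: "?N \<ge> 1" using finD neD by (simp add: Suc_leI card_gt_0_iff)
    have z0: "(0::nat) \<in> {0..n}" by simp
    define MS where "MS = {f (x(0 := a)) - f (x(0 := b)) | a b x.
                 a \<in> D \<and> b \<in> D \<and> x \<in> ?O}"
    have MSimg: "MS = (\<lambda>(a, b, x). f (x(0 := a)) - f (x(0 := b))) ` (D \<times> D \<times> ?O)"
      unfolding MS_def by (auto; force)
    have "finite MS" unfolding MSimg using finD finO by simp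
    moreover have "MS \<noteq> {}" unfolding MSimg using neD neO by simp
    ultimately have "Max MS \<in> MS" by (rule Max_in)
    moreover have mem: "\<And>m. m \<in> MS \<Longrightarrow> \<exists>a b x. m = f (x(0 := a)) - f (x(0 := b)) \<and> a \<in> D \<and> b \<in> D \<and> x \<in> ?O"
      unfolding MS_def by blast
    ultimately obtain \<alpha> \<beta> z where ab: "\<alpha> \<in> D" "\<beta> \<in> D" and z: "z \<in> ?O"
      and Mz: "Max MS = f (z(0 := \<alpha>)) - f (z(0 := \<beta>))" by blast
    have "\<forall>t\<in>{1..T}. \<exists>S. S \<subseteq> {0..n} \<and> card S \<le> k \<and>
        (\<forall>x\<in>?O. \<forall>y\<in>?O. (\<forall>i\<in>S. x i = y i) \<longrightarrow> ft t x = ft t y)"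
      using dep unfolding depends_on_at_most_def by blast
    then have "\<exists>S. \<forall>t\<in>{1..T}. S t \<subseteq> {0..n} \<and> card (S t) \<le> k \<and>
        (\<forall>x\<in>?O. \<forall>y\<in>?O. (\<forall>i\<in>S t. x i = y i) \<longrightarrow> ft t x = ft t y)"
      by (rule bchoice)
    then obtain S where S: "\<forall>t\<in>{1..T}. S t \<subseteq> {0..n} \<and> card (S t) \<le> k \<and>
        (\<forall>x\<in>?O. \<forall>y\<in>?O. (\<forall>i\<in>S t. x i = y i) \<longrightarrow> ft t x = ft t y)" ..
    have SI: "S t \<subseteq> {0..n}" and Sk: "card (S t) \<le> k"
      and SJ: "\<forall>x\<in>?O. \<forall>y\<in>?O. (\<forall>i\<in>S t. x i = y i) \<longrightarrow> ft t x = ft t y"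
      if "t \<in> {1..T}" for t
      using bspec[OF S that] by (rule conjunct1, rule conjunct1[OF conjunct2], rule conjunct2[OF conjunct2])
    have finSt: "finite (S t)" if "t \<in> {1..T}" for t
      using finite_subset[OF SI[OF that]] by simp
    define S' where "S' = (\<lambda>t. if 0 \<in> S t then S t - {0} else {})"
    define u where "u = (\<lambda>t x. ft t (x(0 := \<alpha>)) - ft t (x(0 := \<beta>)))"
    define d where "d = (\<lambda>x. f (x(0 := \<alpha>)) - f (x(0 := \<beta>)))"
    have bound: "\<bar>d z\<bar> \<le> real (card {1..T}) * 4 ^ (k - 1) * real (card D) ^ (k - 1) * ((\<Sum>x\<in>?O. \<bar>d x\<bar>) / real (card ?O))"
    proof (rule junta_bound[where S = S' and u = u])
      show "finite {0..n}" "finite D" "D \<noteq> {}" "finite {1..T}" "z \<in> ?O"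
        using finD neD z by auto
      show "d x = (\<Sum>t\<in>{1..T}. u t x)" if "x \<in> ?O" for x
        using fdef upd_in[OF that z0 ab(1)] upd_in[OF that z0 ab(2)]
        by (simp add: d_def u_def sum_subtractf)
      show "S' t \<subseteq> {0..n}" if "t \<in> {1..T}" for t
        using SI[OF that] by (auto simp: S'_def)
      show "card (S' t) \<le> k - 1" if "t \<in> {1..T}" for t
      proof (cases "0 \<in> S t")
        case True
        then show ?thesis using Sk[OF that] finSt[OF that] by (simp add: S'_def card_Diff_singleton)
      qed (simp add: S'_def)
      show "u t x = u t y" if t: "t \<in> {1..T}" and x: "x \<in> ?O" and y: "y \<in> ?O"
        and agr: "\<forall>i\<in>S' t. x i = y i" for t x y
      proof (cases "0 \<in> S t")
        case True
        have "ft t (x(0 := c)) = ft t (y(0 := c))" if "c \<in> D" for c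
        proof -
          have "\<forall>i\<in>S t. (x(0 := c)) i = (y(0 := c)) i" using agr True by (simp add: S'_def)
          then show ?thesis using SJ[OF t] upd_in[OF x z0 that] upd_in[OF y z0 that] by blast
        qed
        then show ?thesis unfolding u_def using ab by simp
      next
        case False
        have "ft t (w(0 := \<alpha>)) = ft t (w(0 := \<beta>))" if "w \<in> ?O" for w
        proof -
          have "\<forall>i\<in>S t. (w(0 := \<alpha>)) i = (w(0 := \<beta>)) i" using False by auto
          then show ?thesis using SJ[OF t] upd_in[OF that z0 ab(1)] upd_in[OF that z0 ab(2)] by blast
        qed
        then show ?thesis unfolding u_def using x y by simp
      qed
    qed
    define g where "g = (\<lambda>X. Max ((\<lambda>a. f (X(0 := a))) ` D) - f X)"
    have LHS: "measure_pmf.expectation (pmf_of_set ?O) g = (\<Sum>X\<in>?O. g X) / W"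
      unfolding W_def using finO neO by (simp add: integral_pmf_of_set)
    have gge: "g (X(0 := a)) \<ge> 0" if "a \<in> D" for X a
    proof -
      have "X(0 := a, 0 := a) = X(0 := a)" by simp
      then have "f (X(0 := a)) \<in> (\<lambda>b. f (X(0 := a, 0 := b))) ` D" using that by (metis image_eqI)
      then have "f (X(0 := a)) \<le> Max ((\<lambda>b. f (X(0 := a, 0 := b))) ` D)"
        using finD by (intro Max_ge) auto
      then show ?thesis unfolding g_def by simp
    qed
    have dle: "\<bar>d X\<bar> \<le> (\<Sum>a\<in>D. g (X(0 := a)))" for X
    proof -
      have ga: "g (X(0 := \<alpha>)) \<le> (\<Sum>a\<in>D. g (X(0 := a)))"
        and gb: "g (X(0 := \<beta>)) \<le> (\<Sum>a\<in>D. g (X(0 := a)))"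
      proof -
        have "\<And>a. a \<in> D - {\<alpha>} \<Longrightarrow> 0 \<le> g (X(0 := a))" using gge by blast
        then show "g (X(0 := \<alpha>)) \<le> (\<Sum>a\<in>D. g (X(0 := a)))"
          by (rule member_le_sum[OF ab(1) _ finD])
        have "\<And>a. a \<in> D - {\<beta>} \<Longrightarrow> 0 \<le> g (X(0 := a))" using gge by blast
        then show "g (X(0 := \<beta>)) \<le> (\<Sum>a\<in>D. g (X(0 := a)))"
          by (rule member_le_sum[OF ab(2) _ finD])
      qed
      have "d X = g (X(0 := \<beta>)) - g (X(0 := \<alpha>))" unfolding d_def g_def by simp
      then show ?thesis using ga gb gge[OF ab(1), of X] gge[OF ab(2), of X] by linarith
    qed
    have "(\<Sum>X\<in>?O. \<bar>d X\<bar>) \<le> (\<Sum>X\<in>?O. \<Sum>a\<in>D. g (X(0 := a)))"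
      by (rule sum_mono) (rule dle)
    also have "\<dots> = ?N * (\<Sum>X\<in>?O. g X)" by (rule sum_upd[OF z0])
    finally have sd: "(\<Sum>X\<in>?O. \<bar>d X\<bar>) \<le> ?N * (\<Sum>X\<in>?O. g X)" .
    define E where "E = measure_pmf.expectation (pmf_of_set ?O) g"
    define K where "K = real T * 4 ^ (k - 1) * ?N ^ k"
    have Kpos: "K > 0" unfolding K_def using T1 N1 by simp
    have "Max MS \<le> \<bar>d z\<bar>" using Mz unfolding d_def by simp
    also have "\<dots> \<le> real T * 4 ^ (k - 1) * ?N ^ (k - 1) * ((\<Sum>x\<in>?O. \<bar>d x\<bar>) / W)"
      using bound unfolding W_def by simp
    also have "\<dots> \<le> real T * 4 ^ (k - 1) * ?N ^ (k - 1) * (?N * (\<Sum>X\<in>?O. g X) / W)"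
      using sd Wpos T1 N1 by (intro mult_left_mono divide_right_mono) auto
    also have "\<dots> = K * E"
    proof -
      have "Suc (k - 1) = k" using k by simp
      then have "?N ^ (k - 1) * ?N = ?N ^ k" using power_Suc2[of ?N "k - 1"] by simp
      then show ?thesis unfolding K_def E_def LHS by (simp add: field_simps)
    qed
    finally have ME: "Max MS \<le> K * E" .
    have "1 / 4 ^ (k - 1) * (1 / real T) * (1 / ?N ^ k) * Max MS = Max MS / K"
      unfolding K_def by (simp add: field_simps)
    also have "\<dots> \<le> E" using ME Kpos by (simp add: divide_le_eq mult.commute)
    finally show "1 / 4 ^ (k - 1) * (1 / real T) * (1 / ?N ^ k) *
          Max {f (x(0 := a)) - f (x(0 := b)) | a b x. a \<in> D \<and> b \<in> D \<and> x \<in> ?O}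
        \<le> measure_pmf.expectation (pmf_of_set ?O) (\<lambda>X. Max ((\<lambda>a. f (X(0 := a))) ` D) - f X)"
      unfolding MS_def E_def g_def .
  qed
qed

end
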